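(* Let $0<\epsilon<1$ be a fixed constant and let $f:\{0,1\}^n\to\{0,1\}$ be unate. Then $\widetilde{\deg}(f)\le O(M_\epsilon(f)^4)$.
   Context: For $f:\{0,1\}^n\to\{0,1\}$ and $0<\epsilon<1$, $\mathsf N_\epsilon(f)$ is the minimum degree of a real polynomial $p$ such that $|p(x)|\le\epsilon$ whenever $f(x)=0$ and $|p(x)|\ge1$ whenever $f(x)=1$. $\overline f=1-f$ and $M_\epsilon(f):=\max\{\mathsf N_\epsilon(f),\mathsf N_\epsilon(\overline f)\}$. $\widetilde{\deg}(f)$ is the minimum degree of a real polynomial $p$ with $|f(x)-p(x)|\le1/3$ for all $x\in\{0,1\}^n$. $f$ is unate if there exist $a\in\{0,1\}^n$ and a monotone (increasing or decreasing in the coordinatewise order) Boolean function $g$ with $f(x)=g(x\oplus a)$ for all $x$. The constant in $O(\cdot)$ may depend on $\epsilon$. *)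

theory Defs
  imports Complex_Main
begin

text \<open>Points of the Boolean cube {0,1}^n are encoded as x :: nat \<Rightarrow> bool with x i = False
  for all i \<ge> n (True = 1, False = 0).\<close>

definition cube :: "nat \<Rightarrow> (nat \<Rightarrow> bool) set" where
  "cube n = {x. \<forall>i\<ge>n. \<not> x i}"

text \<open>On the cube every real polynomial agrees with a multilinear one of no larger degree, so it
  suffices to consider linear combinations of monomials prod_{i in S} x_i with |S| \<le> d.\<close>

definition poly_deg_le :: "nat \<Rightarrow> nat \<Rightarrow> ((nat \<Rightarrow> bool) \<Rightarrow> real) \<Rightarrow> bool" where
  "poly_deg_le n d p \<longleftrightarrow>
     (\<exists>c :: nat set \<Rightarrow> real. \<forall>x\<in>cube n.
        p x = (\<Sum>S\<in>{S. S \<subseteq> {..<n} \<and> card S \<le> d}. c S * (\<Prod>i\<in>S. if x i then 1 else 0)))"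

definition approx_deg :: "nat \<Rightarrow> ((nat \<Rightarrow> bool) \<Rightarrow> bool) \<Rightarrow> nat" where
  "approx_deg n f = (LEAST d. \<exists>p. poly_deg_le n d p \<and>
      (\<forall>x\<in>cube n. \<bar>(if f x then 1 else 0) - p x\<bar> \<le> 1/3))"

definition N_deg :: "real \<Rightarrow> nat \<Rightarrow> ((nat \<Rightarrow> bool) \<Rightarrow> bool) \<Rightarrow> nat" where
  "N_deg eps n f = (LEAST d. \<exists>p. poly_deg_le n d p \<and>
      (\<forall>x\<in>cube n. (\<not> f x \<longrightarrow> \<bar>p x\<bar> \<le> eps) \<and> (f x \<longrightarrow> \<bar>p x\<bar> \<ge> 1)))"

definition M_deg :: "real \<Rightarrow> nat \<Rightarrow> ((nat \<Rightarrow> bool) \<Rightarrow> bool) \<Rightarrow> nat" where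
  "M_deg eps n f = max (N_deg eps n f) (N_deg eps n (\<lambda>x. \<not> f x))"

definition unate :: "nat \<Rightarrow> ((nat \<Rightarrow> bool) \<Rightarrow> bool) \<Rightarrow> bool" where
  "unate n f \<longleftrightarrow> (\<exists>a\<in>cube n. \<exists>g :: (nat \<Rightarrow> bool) \<Rightarrow> bool.
      (monotone_on (cube n) (\<le>) (\<le>) g \<or> monotone_on (cube n) (\<le>) (\<ge>) g) \<and>
      (\<forall>x\<in>cube n. f x = g (\<lambda>i. x i \<noteq> a i)))"

end

theory Submission
  imports Defs "HOL-Computational_Algebra.Polynomial"
begin


definition mon :: "nat set \<Rightarrow> (nat \<Rightarrow> bool) \<Rightarrow> real" where
  "mon S x = (\<Prod>i\<in>S. if x i then 1 else 0)"

definition Sd :: "nat \<Rightarrow> nat \<Rightarrow> nat set set" where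
  "Sd n d = {S. S \<subseteq> {..<n} \<and> card S \<le> d}"

lemma finite_Sd[simp]: "finite (Sd n d)"
  unfolding Sd_def by (rule finite_subset[of _ "Pow {..<n}"]) auto

lemma poly_deg_le_alt: "poly_deg_le n d p \<longleftrightarrow>
   (\<exists>c. \<forall>x\<in>cube n. p x = (\<Sum>S\<in>Sd n d. c S * mon S x))"
  unfolding poly_deg_le_def Sd_def mon_def by simp

lemma pdeg_gen:
  assumes fin: "finite I" and T: "\<And>j. j\<in>I \<Longrightarrow> T j \<subseteq> {..<n} \<and> card (T j) \<le> d"
    and eq: "\<And>x. x\<in>cube n \<Longrightarrow> p x = (\<Sum>j\<in>I. c j * mon (T j) x)"
  shows "poly_deg_le n d p"
proof -
  define c' where "c' S = (\<Sum>j\<in>{j. j\<in>I \<and> T j = S}. c j)" for S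
  have "T ` I \<subseteq> Sd n d" using T unfolding Sd_def by auto
  have "\<forall>x\<in>cube n. p x = (\<Sum>S\<in>Sd n d. c' S * mon S x)"
  proof
    fix x assume x: "x \<in> cube n"
    have "(\<Sum>S\<in>Sd n d. c' S * mon S x) = (\<Sum>S\<in>Sd n d. (\<Sum>j\<in>{j. j\<in>I \<and> T j = S}. c j * mon (T j) x))"
      unfolding c'_def sum_distrib_right by (intro sum.cong) auto
    also have "\<dots> = (\<Sum>j\<in>I. c j * mon (T j) x)"
      by (rule sum.group[OF fin finite_Sd \<open>T ` I \<subseteq> Sd n d\<close>])
    finally show "p x = (\<Sum>S\<in>Sd n d. c' S * mon S x)" using eq[OF x] by simp
  qed
  then show ?thesis unfolding poly_deg_le_alt by blast
qed

lemma pdeg_cong: "poly_deg_le n d p \<Longrightarrow> (\<And>x. x\<in>cube n \<Longrightarrow> p x = q x) \<Longrightarrow> poly_deg_le n d q"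
  unfolding poly_deg_le_def by metis

lemma pdeg_mono: "poly_deg_le n d p \<Longrightarrow> d \<le> e \<Longrightarrow> poly_deg_le n e p"
proof -
  assume "poly_deg_le n d p" "d \<le> e"
  then obtain c where c: "\<forall>x\<in>cube n. p x = (\<Sum>S\<in>Sd n d. c S * mon S x)" unfolding poly_deg_le_alt by blast
  show ?thesis
    by (rule pdeg_gen[of "Sd n d" "\<lambda>S. S"]) (use c \<open>d \<le> e\<close> in \<open>auto simp: Sd_def\<close>)
qed

lemma pdeg_const: "poly_deg_le n d (\<lambda>x. a)"
  by (rule pdeg_gen[of "{()}" "\<lambda>_. {}" _ _ _ "\<lambda>_. a"]) (auto simp: mon_def)

lemma pdeg_var: "i < n \<Longrightarrow> poly_deg_le n 1 (\<lambda>x. if x i then 1 else 0)"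
  by (rule pdeg_gen[of "{()}" "\<lambda>_. {i}" _ _ _ "\<lambda>_. 1"]) (auto simp: mon_def)

lemma pdeg_add: "poly_deg_le n d p \<Longrightarrow> poly_deg_le n d q \<Longrightarrow> poly_deg_le n d (\<lambda>x. p x + q x)"
proof -
  assume "poly_deg_le n d p" "poly_deg_le n d q"
  then obtain c c' where c: "\<forall>x\<in>cube n. p x = (\<Sum>S\<in>Sd n d. c S * mon S x)"
    and c': "\<forall>x\<in>cube n. q x = (\<Sum>S\<in>Sd n d. c' S * mon S x)" unfolding poly_deg_le_alt by blast
  have "\<forall>x\<in>cube n. p x + q x = (\<Sum>S\<in>Sd n d. (c S + c' S) * mon S x)"
    using c c' by (simp add: sum.distrib distrib_right)
  then show ?thesis unfolding poly_deg_le_alt by (intro exI[of _ "\<lambda>S. c S + c' S"])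
qed

lemma pdeg_scale: "poly_deg_le n d p \<Longrightarrow> poly_deg_le n d (\<lambda>x. a * p x)"
proof -
  assume "poly_deg_le n d p"
  then obtain c where c: "\<forall>x\<in>cube n. p x = (\<Sum>S\<in>Sd n d. c S * mon S x)" unfolding poly_deg_le_alt by blast
  have "\<forall>x\<in>cube n. a * p x = (\<Sum>S\<in>Sd n d. (a * c S) * mon S x)"
    using c by (simp add: sum_distrib_left mult.assoc)
  then show ?thesis unfolding poly_deg_le_alt by (intro exI[of _ "\<lambda>S. a * c S"])
qed

lemma pdeg_diff: "poly_deg_le n d p \<Longrightarrow> poly_deg_le n d q \<Longrightarrow> poly_deg_le n d (\<lambda>x. p x - q x)"
  using pdeg_add[of n d p "\<lambda>x. (-1) * q x"] pdeg_scale[of n d q "-1"] by simp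

lemma mon_eq: "finite S \<Longrightarrow> mon S x = (if \<forall>i\<in>S. x i then 1 else 0)"
  unfolding mon_def by (auto intro: prod.neutral prod_zero)

lemma mon_Un: "finite S \<Longrightarrow> finite T \<Longrightarrow> mon S x * mon T x = mon (S \<union> T) x"
  by (auto simp: mon_eq)

lemma pdeg_mult:
  assumes "poly_deg_le n d p" "poly_deg_le n e q"
  shows "poly_deg_le n (d + e) (\<lambda>x. p x * q x)"
proof -
  obtain c c' where c: "\<forall>x\<in>cube n. p x = (\<Sum>S\<in>Sd n d. c S * mon S x)"
    and c': "\<forall>x\<in>cube n. q x = (\<Sum>S\<in>Sd n e. c' S * mon S x)" using assms unfolding poly_deg_le_alt by blast
  show ?thesis
  proof (rule pdeg_gen[of "Sd n d \<times> Sd n e" "\<lambda>(S,T). S \<union> T" _ _ _ "\<lambda>(S,T). c S * c' T"])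
    show "finite (Sd n d \<times> Sd n e)" by simp
    show "\<And>j. j \<in> Sd n d \<times> Sd n e \<Longrightarrow> (case j of (S, T) \<Rightarrow> S \<union> T) \<subseteq> {..<n} \<and> card (case j of (S, T) \<Rightarrow> S \<union> T) \<le> d + e"
      unfolding Sd_def by (auto intro: order.trans[OF card_Un_le])
    fix x assume x: "x \<in> cube n"
    have fin: "\<And>S. S \<in> Sd n k \<Longrightarrow> finite S" for k unfolding Sd_def by (auto intro: finite_subset)
    have "p x * q x = (\<Sum>S\<in>Sd n d. \<Sum>T\<in>Sd n e. (c S * mon S x) * (c' T * mon T x))"
      using c c' x by (simp add: sum_product)
    also have "\<dots> = (\<Sum>S\<in>Sd n d. \<Sum>T\<in>Sd n e. (c S * c' T) * mon (S \<union> T) x)"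
      by (intro sum.cong refl) (simp add: mon_Un[symmetric] fin)
    also have "\<dots> = (\<Sum>j\<in>Sd n d \<times> Sd n e. (case j of (S,T) \<Rightarrow> c S * c' T) * mon (case j of (S, T) \<Rightarrow> S \<union> T) x)"
      unfolding sum.cartesian_product by (intro sum.cong) auto
    finally show "p x * q x = (\<Sum>j\<in>Sd n d \<times> Sd n e. (case j of (S,T) \<Rightarrow> c S * c' T) * mon (case j of (S, T) \<Rightarrow> S \<union> T) x)" .
  qed
qed

lemma pdeg_sum: "finite K \<Longrightarrow> (\<And>k. k \<in> K \<Longrightarrow> poly_deg_le n d (p k)) \<Longrightarrow> poly_deg_le n d (\<lambda>x. \<Sum>k\<in>K. p k x)"
proof (induction K rule: finite_induct)
  case empty then show ?case using pdeg_const[of n d 0] by simp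
next
  case (insert a F) then show ?case using pdeg_add[of n d "p a" "\<lambda>x. \<Sum>k\<in>F. p k x"] by simp
qed

lemma pdeg_prod: "finite K \<Longrightarrow> (\<And>k. k \<in> K \<Longrightarrow> poly_deg_le n (d k) (p k)) \<Longrightarrow> poly_deg_le n (\<Sum>k\<in>K. d k) (\<lambda>x. \<Prod>k\<in>K. p k x)"
proof (induction K rule: finite_induct)
  case empty then show ?case using pdeg_const[of n 0 1] by simp
next
  case (insert a F) then show ?case using pdeg_mult[of n "d a" "p a" "\<Sum>k\<in>F. d k" "\<lambda>x. \<Prod>k\<in>F. p k x"] by simp
qed

lemma pdeg_lit: "i < n \<Longrightarrow> poly_deg_le n 1 (\<lambda>x. if x i = b then 1 else 0)"
proof (cases b)
  case True
  assume "i < n" then show ?thesis using pdeg_var[of i n] True by simp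
next
  case False
  assume "i < n"
  have "poly_deg_le n 1 (\<lambda>x. 1 - (if x i then 1 else 0))"
    by (rule pdeg_diff[OF pdeg_const pdeg_var[OF \<open>i<n\<close>]])
  then show ?thesis by (rule pdeg_cong) (use False in auto)
qed

lemma pdeg_cube_ind:
  assumes "M \<subseteq> {..<n}"
  shows "poly_deg_le n (card M) (\<lambda>x. if (\<forall>i\<in>M. x i = y i) then 1 else 0)"
proof -
  have fin: "finite M" using assms finite_subset by blast
  have "poly_deg_le n (\<Sum>i\<in>M. 1) (\<lambda>x. \<Prod>i\<in>M. if x i = y i then 1 else 0)"
    by (rule pdeg_prod[OF fin]) (use assms pdeg_lit in auto)
  then have "poly_deg_le n (card M) (\<lambda>x. \<Prod>i\<in>M. if x i = y i then 1 else 0)" by simp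
  then show ?thesis by (rule pdeg_cong) (use fin in \<open>auto intro: prod.neutral prod_zero\<close>)
qed

lemma sum_single: "finite A \<Longrightarrow> a \<in> A \<Longrightarrow> (\<And>y. y \<in> A \<Longrightarrow> y \<noteq> a \<Longrightarrow> g y = 0) \<Longrightarrow> sum g A = (g a :: real)"
  by (simp add: sum.remove sum.neutral)

lemma cube_eq: "cube n = (\<lambda>S i. i \<in> S) ` Pow {..<n}"
proof
  show "cube n \<subseteq> (\<lambda>S i. i \<in> S) ` Pow {..<n}"
  proof
    fix x assume "x \<in> cube n"
    then have "x = (\<lambda>i. i \<in> {i. i < n \<and> x i})" unfolding cube_def by (auto simp: not_le[symmetric])
    then show "x \<in> (\<lambda>S i. i \<in> S) ` Pow {..<n}" by blast
  qed
qed (auto simp: cube_def)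

lemma finite_cube[simp]: "finite (cube n)"
  unfolding cube_eq by simp

lemma cube_ext: "x \<in> cube n \<Longrightarrow> y \<in> cube n \<Longrightarrow> (\<forall>i<n. x i = y i) \<Longrightarrow> x = y"
proof (rule ext)
  fix i assume "x \<in> cube n" "y \<in> cube n" "\<forall>i<n. x i = y i"
  then show "x i = y i" unfolding cube_def by (cases "i < n") auto
qed

lemma pdeg_all: "poly_deg_le n n p"
proof -
  have "poly_deg_le n n (\<lambda>x. \<Sum>y\<in>cube n. p y * (if (\<forall>i\<in>{..<n}. x i = y i) then 1 else 0))"
    by (intro pdeg_sum pdeg_scale) (use pdeg_cube_ind[of "{..<n}" n] in auto)
  moreover have "(\<Sum>y\<in>cube n. p y * (if (\<forall>i\<in>{..<n}. x i = y i) then 1 else 0)) = p x" if x: "x \<in> cube n" for x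
  proof -
    have "(\<Sum>y\<in>cube n. p y * (if (\<forall>i\<in>{..<n}. x i = y i) then 1 else 0)) = p x * (if (\<forall>i\<in>{..<n}. x i = x i) then 1 else 0)"
      by (rule sum_single) (use x cube_ext in auto)
    then show ?thesis by simp
  qed
  ultimately show ?thesis by (rule pdeg_cong)
qed

definition xr :: "(nat \<Rightarrow> bool) \<Rightarrow> (nat \<Rightarrow> bool) \<Rightarrow> (nat \<Rightarrow> bool)" where
  "xr a x = (\<lambda>i. x i \<noteq> a i)"

lemma xr_cube: "a \<in> cube n \<Longrightarrow> x \<in> cube n \<Longrightarrow> xr a x \<in> cube n"
  unfolding cube_def xr_def by auto

lemma xr_xr[simp]: "xr a (xr a x) = x"
  unfolding xr_def by auto

lemma pdeg_xr:
  assumes a: "a \<in> cube n" and p: "poly_deg_le n d p"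
  shows "poly_deg_le n d (\<lambda>x. p (xr a x))"
proof -
  obtain c where c: "\<forall>x\<in>cube n. p x = (\<Sum>S\<in>Sd n d. c S * mon S x)" using p unfolding poly_deg_le_alt by blast
  have "poly_deg_le n d (\<lambda>x. \<Sum>S\<in>Sd n d. c S * (\<Prod>i\<in>S. if x i = (\<not> a i) then 1 else 0))"
  proof (intro pdeg_sum pdeg_scale finite_Sd)
    fix S assume S: "S \<in> Sd n d"
    then have fin: "finite S" unfolding Sd_def by (auto intro: finite_subset)
    have "poly_deg_le n (\<Sum>i\<in>S. 1) (\<lambda>x. \<Prod>i\<in>S. if x i = (\<not> a i) then 1 else 0)"
      by (rule pdeg_prod[OF fin]) (use S pdeg_lit in \<open>auto simp: Sd_def\<close>)
    then show "poly_deg_le n d (\<lambda>x. \<Prod>i\<in>S. if x i = (\<not> a i) then 1 else 0)"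
      by (rule pdeg_mono) (use S in \<open>simp add: Sd_def\<close>)
  qed
  then show ?thesis
  proof (rule pdeg_cong)
    fix x assume x: "x \<in> cube n"
    show "(\<Sum>S\<in>Sd n d. c S * (\<Prod>i\<in>S. if x i = (\<not> a i) then 1 else 0)) = p (xr a x)"
      using c xr_cube[OF a x] by (auto simp: mon_def xr_def intro!: sum.cong prod.cong)
  qed
qed

definition cert :: "nat \<Rightarrow> ((nat \<Rightarrow> bool) \<Rightarrow> bool) \<Rightarrow> bool \<Rightarrow> nat \<Rightarrow> bool" where
  "cert n g v a \<longleftrightarrow> (\<forall>x\<in>cube n. g x = v \<longrightarrow> (\<exists>S\<subseteq>{..<n}. card S \<le> a \<and>
      (\<forall>y\<in>cube n. (\<forall>i\<in>S. y i = x i) \<longrightarrow> g y = v)))"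

definition ow :: "nat set \<Rightarrow> nat set \<Rightarrow> (nat \<Rightarrow> bool) \<Rightarrow> (nat \<Rightarrow> bool)" where
  "ow m R x = (\<lambda>i. if i \<in> m then i \<in> R else x i)"

lemma ow_cube: "m \<subseteq> {..<n} \<Longrightarrow> x \<in> cube n \<Longrightarrow> ow m R x \<in> cube n"
  unfolding cube_def ow_def by auto

lemma ind_g: "poly_deg_le n 0 (\<lambda>x. if g x then 1 else 0)" if "\<And>x. x \<in> cube n \<Longrightarrow> g x = v"
  by (rule pdeg_cong[OF pdeg_const[of n 0 "if v then 1 else 0"]]) (use that in auto)

lemma cert_poly:
  "cert n g True a \<Longrightarrow> cert n g False b \<Longrightarrow> poly_deg_le n (a * b) (\<lambda>x. if g x then 1 else 0)"
proof (induction b arbitrary: g)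
  case 0
  show ?case
  proof (cases "\<exists>z\<in>cube n. \<not> g z")
    case True
    then obtain z where z: "z \<in> cube n" "\<not> g z" by blast
    with "0.prems"(2) obtain S where "S \<subseteq> {..<n}" "card S \<le> 0" "\<forall>y\<in>cube n. (\<forall>i\<in>S. y i = z i) \<longrightarrow> g y = False"
      unfolding cert_def by force
    moreover have "finite S" using \<open>S \<subseteq> {..<n}\<close> finite_subset by blast
    ultimately have "\<And>x. x \<in> cube n \<Longrightarrow> g x = False" by auto
    then show ?thesis using ind_g[of n g False] by simp
  next
    case False
    then have "\<And>x. x \<in> cube n \<Longrightarrow> g x = True" by auto
    then show ?thesis using ind_g by simp
  qed
next
  case (Suc b)
  show ?case
  proof (cases "\<exists>w\<in>cube n. g w")
    case False
    then have "\<And>x. x \<in> cube n \<Longrightarrow> g x = False" by auto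
    then show ?thesis using pdeg_mono[OF ind_g[of n g False]] by simp
  next
    case True
    then obtain w where w: "w \<in> cube n" "g w" by blast
    with Suc.prems(1) obtain m where m: "m \<subseteq> {..<n}" "card m \<le> a" "\<forall>y\<in>cube n. (\<forall>i\<in>m. y i = w i) \<longrightarrow> g y = True"
      unfolding cert_def by force
    have finm: "finite m" using m(1) finite_subset by blast
    have IH: "poly_deg_le n (a * b) (\<lambda>x. if g (ow m R x) then 1 else 0)" for R
    proof (rule Suc.IH)
      show "cert n (\<lambda>x. g (ow m R x)) True a" unfolding cert_def
      proof (intro ballI impI)
        fix x assume x: "x \<in> cube n" "g (ow m R x) = True"
        have "ow m R x \<in> cube n" using ow_cube[OF m(1) x(1)] .
        from Suc.prems(1)[unfolded cert_def, rule_format, OF this x(2)]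
        obtain S where S: "S \<subseteq> {..<n}" "card S \<le> a" "\<forall>y\<in>cube n. (\<forall>i\<in>S. y i = ow m R x i) \<longrightarrow> g y = True"
          by blast
        have "finite S" using S(1) finite_subset by blast
        have "card (S - m) \<le> a" using card_mono[OF \<open>finite S\<close>, of "S - m"] S(2) by auto
        moreover have "\<forall>y\<in>cube n. (\<forall>i\<in>S - m. y i = x i) \<longrightarrow> g (ow m R y) = True"
        proof (intro ballI impI)
          fix y assume "y \<in> cube n" "\<forall>i\<in>S - m. y i = x i"
          then show "g (ow m R y) = True" using S(3) ow_cube[OF m(1)] by (auto simp: ow_def)
        qed
        ultimately show "\<exists>S\<subseteq>{..<n}. card S \<le> a \<and> (\<forall>y\<in>cube n. (\<forall>i\<in>S. y i = x i) \<longrightarrow> g (ow m R y) = True)"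
          using S(1) by (intro exI[of _ "S - m"]) auto
      qed
      show "cert n (\<lambda>x. g (ow m R x)) False b" unfolding cert_def
      proof (intro ballI impI)
        fix x assume x: "x \<in> cube n" "g (ow m R x) = False"
        have "ow m R x \<in> cube n" using ow_cube[OF m(1) x(1)] .
        from Suc.prems(2)[unfolded cert_def, rule_format, OF this x(2)]
        obtain S where S: "S \<subseteq> {..<n}" "card S \<le> Suc b" "\<forall>y\<in>cube n. (\<forall>i\<in>S. y i = ow m R x i) \<longrightarrow> g y = False"
          by blast
        have "finite S" using S(1) finite_subset by blast
        have "S \<inter> m \<noteq> {}"
        proof
          assume e: "S \<inter> m = {}"
          define y where "y = (\<lambda>i. if i \<in> m then w i else ow m R x i)"
          have y: "y \<in> cube n" using w(1) ow_cube[OF m(1) x(1)] unfolding y_def cube_def by auto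
          have "\<forall>i\<in>m. y i = w i" unfolding y_def by simp
          then have "g y = True" using m(3) y by blast
          moreover have "\<forall>i\<in>S. y i = ow m R x i" using e unfolding y_def by auto
          then have "g y = False" using S(3) y by blast
          ultimately show False by simp
        qed
        then have "card (S - m) < card S" using \<open>finite S\<close> by (intro psubset_card_mono) auto
        then have "card (S - m) \<le> b" using S(2) by simp
        moreover have "\<forall>y\<in>cube n. (\<forall>i\<in>S - m. y i = x i) \<longrightarrow> g (ow m R y) = False"
        proof (intro ballI impI)
          fix y assume "y \<in> cube n" "\<forall>i\<in>S - m. y i = x i"
          then show "g (ow m R y) = False" using S(3) ow_cube[OF m(1)] by (auto simp: ow_def)
        qed
        ultimately show "\<exists>S\<subseteq>{..<n}. card S \<le> b \<and> (\<forall>y\<in>cube n. (\<forall>i\<in>S. y i = x i) \<longrightarrow> g (ow m R y) = False)"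
          using S(1) by (intro exI[of _ "S - m"]) auto
      qed
    qed
    have "poly_deg_le n (a * Suc b) (\<lambda>x. \<Sum>R\<in>Pow m. (if (\<forall>i\<in>m. x i = (i \<in> R)) then 1 else 0) * (if g (ow m R x) then 1 else 0))"
    proof (intro pdeg_sum)
      fix R
      have "poly_deg_le n (card m + a * b) (\<lambda>x. (if (\<forall>i\<in>m. x i = (i \<in> R)) then 1 else 0) * (if g (ow m R x) then 1 else 0))"
        by (rule pdeg_mult[OF pdeg_cube_ind[OF m(1)] IH])
      then show "poly_deg_le n (a * Suc b) (\<lambda>x. (if (\<forall>i\<in>m. x i = (i \<in> R)) then 1 else 0) * (if g (ow m R x) then 1 else 0))"
        by (rule pdeg_mono) (use m(2) in simp)
    qed (use finm in simp)
    then show ?thesis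
    proof (rule pdeg_cong)
      fix x assume x: "x \<in> cube n"
      have "(\<Sum>R\<in>Pow m. (if (\<forall>i\<in>m. x i = (i \<in> R)) then 1 else 0) * (if g (ow m R x) then 1 else 0)) =
        (if (\<forall>i\<in>m. x i = (i \<in> {i\<in>m. x i})) then 1 else 0) * (if g (ow m {i\<in>m. x i} x) then 1 else (0::real))"
        by (rule sum_single[where a="{i\<in>m. x i}" and g="\<lambda>R. (if (\<forall>i\<in>m. x i = (i \<in> R)) then 1 else 0) * (if g (ow m R x) then 1 else 0)"]) (use finm in auto)
      also have "ow m {i\<in>m. x i} x = x" unfolding ow_def by auto
      finally show "(\<Sum>R\<in>Pow m. (if (\<forall>i\<in>m. x i = (i \<in> R)) then 1 else 0) * (if g (ow m R x) then 1 else 0)) = (if g x then 1 else (0::real))" by simp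
    qed
  qed
qed



lemma prodA: fixes j d :: nat shows "1 \<le> j \<Longrightarrow> j \<le> d \<Longrightarrow> (\<Prod>i\<in>{1..d}-{j}. i) * j = fact d"
proof -
  assume "1 \<le> j" "j \<le> d"
  then have "(\<Prod>i\<in>{1..d}. i) = j * (\<Prod>i\<in>{1..d}-{j}. i)" by (intro prod.remove) auto
  then show ?thesis by (simp add: fact_prod mult.commute)
qed

lemma prodQ: fixes j d :: nat shows "1 \<le> j \<Longrightarrow> j \<le> d \<Longrightarrow> (\<Prod>i\<in>{1..d}-{j}. i + j) * (2 * j * fact j) = (fact (d + j) :: nat)"
proof -
  assume "1 \<le> j" "j \<le> d"
  then have "(\<Prod>i\<in>{1..d}. i + j) = (j + j) * (\<Prod>i\<in>{1..d}-{j}. i + j)" by (subst prod.remove) auto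
  moreover have "(\<Prod>i\<in>{1..d}. i + j) = \<Prod>{1 + j..d + j}"
    using prod.shift_bounds_cl_nat_ivl[of "\<lambda>i. i" 1 j d] by simp
  moreover have "fact (d + j) = fact j * \<Prod>{Suc j..d + j}" by (rule fact_eq_fact_times) simp
  ultimately have "fact (d + j) = fact j * ((j + j) * (\<Prod>i\<in>{1..d}-{j}. i + j))" by simp
  then show ?thesis by (simp add: algebra_simps)
qed

lemma prodP: fixes j d :: nat shows "1 \<le> j \<Longrightarrow> j \<le> d \<Longrightarrow> (\<Prod>i\<in>{1..d}-{j}. if i < j then j - i else i - j) = fact (j - 1) * (fact (d - j) :: nat)"
proof -
  assume j: "1 \<le> j" "j \<le> d"
  have split: "{1..d}-{j} = {1..<j} \<union> {j+1..d}" using j by auto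
  have "(\<Prod>i\<in>{1..d}-{j}. if i < j then j - i else i - j) =
     (\<Prod>i\<in>{1..<j}. if i < j then j - i else i - j) * (\<Prod>i\<in>{j+1..d}. if i < j then j - i else i - j)"
    unfolding split by (rule prod.union_disjoint) auto
  also have "(\<Prod>i\<in>{1..<j}. if i < j then j - i else i - j) = (\<Prod>i\<in>{1..<j}. j - i)"
    by (rule prod.cong) auto
  also have "\<dots> = (\<Prod>i\<in>{1..<j}. j - (j + 1 - Suc i))"
    by (rule prod.atLeastLessThan_rev)
  also have "\<dots> = (\<Prod>i\<in>{1..<j}. i)" by (rule prod.cong) auto
  also have "\<dots> = fact (j - 1)" using j by (simp add: fact_prod atLeastLessThanSuc_atLeastAtMost[symmetric])
  also have "(\<Prod>i\<in>{j+1..d}. if i < j then j - i else i - j) = (\<Prod>i\<in>{1 + j..(d - j) + j}. i - j)"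
    using j by (intro prod.cong) auto
  also have "\<dots> = (\<Prod>i\<in>{1..d - j}. i)" by (subst prod.shift_bounds_cl_nat_ivl) simp
  also have "\<dots> = fact (d - j)" by (simp add: fact_prod)
  finally show ?thesis .
qed

lemma fact_sq_le: fixes j d :: nat shows "j \<le> d \<Longrightarrow> fact d * fact d \<le> fact (d - j) * (fact (d + j) :: nat)"
proof -
  assume j: "j \<le> d"
  have f1: "fact d = fact (d - j) * \<Prod>{Suc (d - j)..d}" by (rule fact_eq_fact_times) simp
  have f2: "fact (d + j) = fact d * \<Prod>{Suc d..d + j}" by (rule fact_eq_fact_times) simp
  have "\<Prod>{Suc (d - j)..d} = (\<Prod>i\<in>{1..j}. i + (d - j))"
    using prod.shift_bounds_cl_nat_ivl[of "\<lambda>i. i" 1 "d - j" j] j by simp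
  also have "\<dots> \<le> (\<Prod>i\<in>{1..j}. i + d)" by (intro prod_mono) auto
  also have "\<dots> = \<Prod>{Suc d..d + j}"
    using prod.shift_bounds_cl_nat_ivl[of "\<lambda>i. i" 1 d j] by (simp add: add.commute)
  finally have "\<Prod>{Suc (d - j)..d} \<le> \<Prod>{Suc d..d + j}" .
  then have "fact d * \<Prod>{Suc (d - j)..d} \<le> fact d * \<Prod>{Suc d..d + j}" by simp
  then show ?thesis by (subst (2) f1, subst f2) (simp add: mult_ac)
qed

lemma nat_G: fixes j d :: nat assumes j: "1 \<le> j" "j \<le> d"
  shows "(\<Prod>i\<in>{1..d}-{j}. i) ^ 2 \<le> 2 * (\<Prod>i\<in>{1..d}-{j}. if i < j then j - i else i - j) * (\<Prod>i\<in>{1..d}-{j}. i + j)"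
proof -
  define A where "A = (\<Prod>i\<in>{1..d}-{j}. i)"
  define Q where "Q = (\<Prod>i\<in>{1..d}-{j}. i + j)"
  have a: "A * j = fact d" using prodA[OF j] A_def by simp
  have q: "Q * (2 * j * fact j) = fact (d + j)" using prodQ[OF j] Q_def by simp
  have fj: "fact j = j * (fact (j - 1) :: nat)" using j by (cases j) auto
  have "A^2 * (2 * j * fact j) = 2 * fact (j - 1) * (A * j) * (A * j)" by (simp add: fj power2_eq_square mult_ac)
  also have "\<dots> = 2 * fact (j - 1) * (fact d * fact d)" by (simp add: a)
  also have "\<dots> \<le> 2 * fact (j - 1) * (fact (d - j) * fact (d + j))" using fact_sq_le[of j d] j by simp
  also have "\<dots> = (2 * (fact (j - 1) * fact (d - j)) * Q) * (2 * j * fact j)" by (simp add: q[symmetric] mult_ac)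
  finally have le: "A^2 * (2 * j * fact j) \<le> (2 * (fact (j - 1) * fact (d - j)) * Q) * (2 * j * fact j)" .
  have "0 < 2 * j * fact j" using j by simp
  then have "A^2 \<le> 2 * (fact (j - 1) * fact (d - j)) * Q" using le mult_le_cancel2 by blast
  then show ?thesis using prodP[OF j] A_def Q_def by simp
qed

lemma sum_single': "finite A \<Longrightarrow> a \<in> A \<Longrightarrow> (\<And>y. y \<in> A \<Longrightarrow> y \<noteq> a \<Longrightarrow> g y = 0) \<Longrightarrow> sum g A = (g a :: real)"
  by (simp add: sum.remove sum.neutral)

lemma lagrange:
  fixes q :: "real poly" and x :: "nat \<Rightarrow> real"
  assumes deg: "degree q \<le> d" and inj: "inj_on x {..d}"
  shows "poly q z = (\<Sum>j\<le>d. poly q (x j) * (\<Prod>i\<in>{..d}-{j}. (z - x i) / (x j - x i)))"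
proof -
  define L where "L j = smult (1 / (\<Prod>i\<in>{..d}-{j}. (x j - x i))) (\<Prod>i\<in>{..d}-{j}. [:- x i, 1:])" for j
  define I where "I = (\<Sum>j\<le>d. smult (poly q (x j)) (L j))"
  have polyL: "poly (L j) z = (\<Prod>i\<in>{..d}-{j}. (z - x i) / (x j - x i))" for j z
  proof -
    have "poly (L j) z = (\<Prod>i\<in>{..d}-{j}. (z - x i)) / (\<Prod>i\<in>{..d}-{j}. (x j - x i))"
      unfolding L_def by (simp add: poly_prod)
    then show ?thesis by (simp add: prod_dividef)
  qed
  have degL: "degree (L j) \<le> d" if "j \<le> d" for j
  proof -
    have "degree (\<Prod>i\<in>{..d}-{j}. [:- x i, 1:]) \<le> (\<Sum>i\<in>{..d}-{j}. degree [:- x i, 1:])"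
      using degree_prod_sum_le[of "{..d}-{j}" "\<lambda>i. [:- x i, 1:]"] by (simp add: o_def)
    also have "\<dots> = card ({..d}-{j})" by simp
    also have "\<dots> = d" using that by simp
    finally show ?thesis unfolding L_def using degree_smult_le order.trans by blast
  qed
  have degI: "degree I \<le> d" unfolding I_def
    by (rule degree_sum_le) (use degL degree_smult_le order.trans in auto)
  have Lnode: "poly (L j) (x k) = (if j = k then 1 else 0)" if "j \<le> d" "k \<le> d" for j k
  proof (cases "j = k")
    case True
    have "(\<Prod>i\<in>{..d}-{j}. (x k - x i) / (x j - x i)) = 1"
      using True inj that by (intro prod.neutral) (auto simp: inj_on_def)
    then show ?thesis using True polyL by simp
  next
    case False
    have "(\<Prod>i\<in>{..d}-{j}. (x k - x i) / (x j - x i)) = 0"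
      using False that by (intro prod_zero) auto
    then show ?thesis using False polyL by simp
  qed
  have Inode: "poly I (x k) = poly q (x k)" if "k \<le> d" for k
  proof -
    have "poly I (x k) = (\<Sum>j\<le>d. poly q (x j) * poly (L j) (x k))" unfolding I_def by (simp add: poly_sum)
    also have "\<dots> = poly q (x k) * poly (L k) (x k)"
      by (rule sum_single'[where g="\<lambda>j. poly q (x j) * poly (L j) (x k)"]) (use that Lnode in auto)
    also have "\<dots> = poly q (x k)" using Lnode that by simp
    finally show ?thesis .
  qed
  have "I - q = 0"
  proof (rule ccontr)
    assume nz: "I - q \<noteq> 0"
    have "x ` {..d} \<subseteq> {t. poly (I - q) t = 0}" using Inode by auto
    then have "card (x ` {..d}) \<le> card {t. poly (I - q) t = 0}"
      using poly_roots_finite[OF nz] by (intro card_mono) auto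
    also have "\<dots> \<le> degree (I - q)" by (rule card_poly_roots_bound[OF nz])
    also have "\<dots> \<le> d" by (rule degree_diff_le[OF degI deg])
    finally show False using card_image[OF inj] by simp
  qed
  then have "poly q z = poly I z" by simp
  also have "\<dots> = (\<Sum>j\<le>d. poly q (x j) * poly (L j) z)" unfolding I_def by (simp add: poly_sum)
  finally show ?thesis using polyL by simp
qed

lemma G_real:
  fixes j d :: nat assumes j: "1 \<le> j" "j \<le> d"
  shows "(\<Prod>i\<in>{1..d}-{j}. (real i)^2 / \<bar>(real i)^2 - (real j)^2\<bar>) \<le> 2"
proof -
  define A where "A = (\<Prod>i\<in>{1..d}-{j}. i)"
  define P where "P = (\<Prod>i\<in>{1..d}-{j}. if i < j then j - i else i - j)"
  define Q where "Q = (\<Prod>i\<in>{1..d}-{j}. i + j)"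
  have num: "(\<Prod>i\<in>{1..d}-{j}. (real i)^2) = real (A^2)"
    unfolding A_def by (simp add: prod_power_distrib)
  have pt: "\<bar>(real i)^2 - (real j)^2\<bar> = real (if i < j then j - i else i - j) * real (i + j)" for i
  proof (cases "i < j")
    case True
    then have "(real i)^2 \<le> (real j)^2" by (intro power_mono) auto
    then have "\<bar>(real i)^2 - (real j)^2\<bar> = (real j)^2 - (real i)^2" by simp
    also have "\<dots> = (real j - real i) * (real i + real j)" by (simp add: power2_eq_square algebra_simps)
    finally have "\<bar>(real i)^2 - (real j)^2\<bar> = (real j - real i) * (real i + real j)" .
    then show ?thesis using True by (simp add: of_nat_diff)
  next
    case False
    then have "(real j)^2 \<le> (real i)^2" by (intro power_mono) auto
    then have "\<bar>(real i)^2 - (real j)^2\<bar> = (real i)^2 - (real j)^2" by simp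
    also have "\<dots> = (real i - real j) * (real i + real j)" by (simp add: power2_eq_square algebra_simps)
    finally have "\<bar>(real i)^2 - (real j)^2\<bar> = (real i - real j) * (real i + real j)" .
    then show ?thesis using False by (simp add: of_nat_diff)
  qed
  have den: "(\<Prod>i\<in>{1..d}-{j}. \<bar>(real i)^2 - (real j)^2\<bar>) = real P * real Q"
    unfolding P_def Q_def pt by (simp add: prod.distrib)
  have Ppos: "P > 0" unfolding P_def by (intro prod_pos) auto
  have Qpos: "Q > 0" unfolding Q_def using j by (intro prod_pos) auto
  have "real (A^2) \<le> 2 * real P * real Q"
  proof -
    have "A^2 \<le> 2*P*Q" using nat_G[OF j] unfolding A_def P_def Q_def .
    then have "real (A^2) \<le> real (2*P*Q)" by (simp only: of_nat_le_iff)
    then show ?thesis by simp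
  qed
  then have "real (A^2) / (real P * real Q) \<le> 2"
    using Ppos Qpos by (simp add: divide_le_eq mult.assoc)
  moreover have "(\<Prod>i\<in>{1..d}-{j}. (real i)^2 / \<bar>(real i)^2 - (real j)^2\<bar>) =
     (\<Prod>i\<in>{1..d}-{j}. (real i)^2) / (\<Prod>i\<in>{1..d}-{j}. \<bar>(real i)^2 - (real j)^2\<bar>)"
    by (rule prod_dividef)
  ultimately show ?thesis unfolding num den by simp
qed

lemma inv_sq_sum: "(\<Sum>i=1..d. 1 / (real i)^2) \<le> 2 - 2 / (real d + 1)"
proof (induction d)
  case 0 then show ?case by simp
next
  case (Suc d)
  have "(\<Sum>i=1..Suc d. 1 / (real i)^2) = (\<Sum>i=1..d. 1 / (real i)^2) + 1 / (real d + 1)^2" by simp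
  also have "\<dots> \<le> 2 - 2 / (real d + 1) + 1 / (real d + 1)^2" using Suc by simp
  also have "\<dots> \<le> 2 - 2 / (real (Suc d) + 1)"
  proof -
    define t where "t = real d + 1"
    have t: "t \<ge> 1" unfolding t_def by simp
    have e: "2 / t - 2 / (t + 1) = 2 / (t * (t + 1))" using t by (simp add: field_simps)
    have "1 / t^2 = 2 / (2 * t * t)" using t by (simp add: power2_eq_square)
    also have "\<dots> \<le> 2 / (t * (t + 1))"
    proof (rule frac_le)
      show "0 < t * (t + 1)" using t by simp
      show "t * (t + 1) \<le> 2 * t * t" using t by (simp add: algebra_simps)
    qed auto
    finally have "1 / t^2 \<le> 2 / t - 2 / (t + 1)" using e by simp
    then have "1 / (real d + 1)^2 \<le> 2 / (real d + 1) - 2 / (real d + 2)" unfolding t_def by (simp add: add.assoc)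
    moreover have eq: "real (Suc d) + 1 = real d + 2" by simp
    ultimately show ?thesis unfolding eq by linarith
  qed
  finally show ?case .
qed

lemma prod_one_plus_le:
  assumes "S \<subseteq> {1..d}"
  shows "(\<Prod>i\<in>S. 1 + 1 / (real i)^2) \<le> 9"
proof -
  have fin: "finite S" using assms finite_subset by blast
  have "(\<Prod>i\<in>S. 1 + 1 / (real i)^2) \<le> (\<Prod>i\<in>S. exp (1 / (real i)^2))"
    by (intro prod_mono) (auto intro: add_nonneg_nonneg)
  also have "\<dots> = exp (\<Sum>i\<in>S. 1 / (real i)^2)" by (simp add: exp_sum fin)
  also have "\<dots> \<le> exp (\<Sum>i=1..d. 1 / (real i)^2)"
    by (subst exp_le_cancel_iff, rule sum_mono2) (use assms in auto)
  also have "\<dots> \<le> exp 2"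
  proof -
    have "0 \<le> 2 / (real d + 1)" by simp
    then have "(\<Sum>i=1..d. 1 / (real i)^2) \<le> 2" using inv_sq_sum[of d] by linarith
    then show ?thesis by simp
  qed
  also have "\<dots> = exp 1 * exp 1" by (simp flip: exp_add)
  also have "\<dots> \<le> 3 * 3" using exp_le by (intro mult_mono) auto
  finally show ?thesis by simp
qed

definition nd :: "nat \<Rightarrow> nat \<Rightarrow> real" where
  "nd K i = 1 + real K * (real i)^2"

definition wt :: "nat \<Rightarrow> nat \<Rightarrow> nat \<Rightarrow> real" where
  "wt K d j = (\<Prod>i\<in>{..d}-{j}. (0 - nd K i) / (nd K j - nd K i))"

lemma nd_pos: "nd K i > 0"
  unfolding nd_def by (simp add: add_pos_nonneg)

lemma nd_diff: "nd K i - nd K j = real K * ((real i)^2 - (real j)^2)"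
  unfolding nd_def by (simp add: algebra_simps)

lemma nd_inj: "K \<ge> 1 \<Longrightarrow> inj_on (nd K) A"
proof (rule inj_onI)
  fix i j assume K: "K \<ge> 1" and "nd K i = nd K j"
  then have "real K * ((real i)^2 - (real j)^2) = 0" using nd_diff[of K i j] by simp
  then have "(real i)^2 = (real j)^2" using K by simp
  then have "real i = real j" by (subst (asm) power2_eq_iff_nonneg) auto
  then show "i = j" by simp
qed

lemma w_abs:
  fixes K d j :: nat
  assumes K: "K \<ge> 1" and j: "1 \<le> j" "j \<le> d"
  shows "\<bar>wt K d j\<bar> \<le> 18 / (real K * (real j)^2)"
proof -
  let ?x = "nd K"
  have Kr: "real K \<ge> 1" using K by simp
  have ab: "\<bar>(0 - ?x i) / (?x j - ?x i)\<bar> = ?x i / \<bar>?x i - ?x j\<bar>" for i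
    using nd_pos[of K i] by (simp add: abs_divide abs_minus_commute)
  have "\<bar>wt K d j\<bar> = (\<Prod>i\<in>{..d}-{j}. ?x i / \<bar>?x i - ?x j\<bar>)"
    unfolding wt_def abs_prod ab ..
  also have split: "{..d}-{j} = insert 0 ({1..d}-{j})" using j by auto
  also have "(\<Prod>i\<in>insert 0 ({1..d}-{j}). ?x i / \<bar>?x i - ?x j\<bar>) =
     ?x 0 / \<bar>?x 0 - ?x j\<bar> * (\<Prod>i\<in>{1..d}-{j}. ?x i / \<bar>?x i - ?x j\<bar>)"
    by (rule prod.insert) auto
  also have "?x 0 / \<bar>?x 0 - ?x j\<bar> = 1 / (real K * (real j)^2)"
    using nd_diff[of K 0 j] by (simp add: nd_def)
  finally have wabs: "\<bar>wt K d j\<bar> = 1 / (real K * (real j)^2) * (\<Prod>i\<in>{1..d}-{j}. ?x i / \<bar>?x i - ?x j\<bar>)" .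
  have "(\<Prod>i\<in>{1..d}-{j}. ?x i / \<bar>?x i - ?x j\<bar>) \<le>
      (\<Prod>i\<in>{1..d}-{j}. (1 + 1 / (real i)^2) * ((real i)^2 / \<bar>(real i)^2 - (real j)^2\<bar>))"
  proof (rule prod_mono)
    fix i assume i: "i \<in> {1..d}-{j}"
    have "real i \<noteq> real j" using i by simp
    then have "(real i)^2 \<noteq> (real j)^2" by (subst power2_eq_iff_nonneg) auto
    then have ne: "\<bar>(real i)^2 - (real j)^2\<bar> > 0" by simp
    have "?x i / \<bar>?x i - ?x j\<bar> = (1 / real K + (real i)^2) / \<bar>(real i)^2 - (real j)^2\<bar>"
    proof -
      have d1: "\<bar>?x i - ?x j\<bar> = real K * \<bar>(real i)^2 - (real j)^2\<bar>"
        using nd_diff[of K i j] Kr by (simp add: abs_mult)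
      have d2: "?x i = real K * (1 / real K + (real i)^2)" using Kr by (simp add: nd_def field_simps)
      show ?thesis unfolding d1 using Kr by (subst d2) simp
    qed
    also have "\<dots> \<le> (1 + (real i)^2) / \<bar>(real i)^2 - (real j)^2\<bar>"
      using Kr ne by (intro divide_right_mono) auto
    also have "\<dots> = (1 + 1 / (real i)^2) * ((real i)^2 / \<bar>(real i)^2 - (real j)^2\<bar>)"
      using i by (simp add: field_simps)
    finally show "0 \<le> ?x i / \<bar>?x i - ?x j\<bar> \<and> ?x i / \<bar>?x i - ?x j\<bar> \<le> (1 + 1 / (real i)^2) * ((real i)^2 / \<bar>(real i)^2 - (real j)^2\<bar>)"
      using nd_pos[of K i] by simp
  qed
  also have "\<dots> = (\<Prod>i\<in>{1..d}-{j}. 1 + 1 / (real i)^2) * (\<Prod>i\<in>{1..d}-{j}. (real i)^2 / \<bar>(real i)^2 - (real j)^2\<bar>)"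
    by (rule prod.distrib)
  also have "\<dots> \<le> 9 * 2"
    by (intro mult_mono prod_one_plus_le G_real j prod_nonneg) auto
  finally have "(\<Prod>i\<in>{1..d}-{j}. ?x i / \<bar>?x i - ?x j\<bar>) \<le> 9 * 2" .
  then have "\<bar>wt K d j\<bar> \<le> 1 / (real K * (real j)^2) * (9 * 2)"
    unfolding wabs by (rule mult_left_mono) simp
  then show ?thesis by simp
qed

lemma w_sum1: "K \<ge> 1 \<Longrightarrow> (\<Sum>j\<le>d. wt K d j) = 1"
  using lagrange[of "1 :: real poly" d "nd K" 0] nd_inj[of K "{..d}"] unfolding wt_def by simp

lemma w0_nonneg: "wt K d 0 \<ge> 0"
  unfolding wt_def
proof (rule prod_nonneg)
  fix i assume "i \<in> {..d}-{0}"
  then have "nd K 0 - nd K i \<le> 0" unfolding nd_def by simp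
  then show "0 \<le> (0 - nd K i) / (nd K 0 - nd K i)"
    using nd_pos[of K i] by (intro divide_nonpos_nonpos) auto
qed

lemma w_sum_abs:
  assumes K: "K \<ge> 1"
  shows "(\<Sum>j\<le>d. \<bar>wt K d j\<bar>) \<le> 1 + 72 / real K"
proof -
  have split: "{..d} = insert 0 {1..d}" by auto
  have s1: "(\<Sum>j\<le>d. wt K d j) = wt K d 0 + (\<Sum>j\<in>{1..d}. wt K d j)"
    unfolding split by (rule sum.insert) auto
  have s2: "(\<Sum>j\<le>d. \<bar>wt K d j\<bar>) = \<bar>wt K d 0\<bar> + (\<Sum>j\<in>{1..d}. \<bar>wt K d j\<bar>)"
    unfolding split by (rule sum.insert) auto
  have b: "(\<Sum>j\<in>{1..d}. \<bar>wt K d j\<bar>) \<le> 36 / real K"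
  proof -
    have "(\<Sum>j\<in>{1..d}. \<bar>wt K d j\<bar>) \<le> (\<Sum>j\<in>{1..d}. 18 / real K * (1 / (real j)^2))"
      by (rule sum_mono) (use w_abs[OF K] in auto)
    also have "\<dots> = 18 / real K * (\<Sum>j=1..d. 1 / (real j)^2)" by (simp add: sum_distrib_left)
    also have "\<dots> \<le> 18 / real K * 2"
    proof (rule mult_left_mono)
      have "0 \<le> 2 / (real d + 1)" by simp
      then show "(\<Sum>j=1..d. 1 / (real j)^2) \<le> 2" using inv_sq_sum[of d] by linarith
    qed simp
    finally show ?thesis by simp
  qed
  have "- (\<Sum>j\<in>{1..d}. wt K d j) \<le> (\<Sum>j\<in>{1..d}. \<bar>wt K d j\<bar>)"
    by (rule order.trans[OF _ sum_abs[of "wt K d" "{1..d}"]]) simp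
  then have "wt K d 0 \<le> 1 + (\<Sum>j\<in>{1..d}. \<bar>wt K d j\<bar>)" using s1 w_sum1[OF K, of d] by linarith
  then show ?thesis using s2 b w0_nonneg[of K d] by simp
qed

lemma univ_bound:
  fixes q :: "real poly" and K d k :: nat
  assumes K: "K \<ge> 1" and deg: "degree q \<le> d" and q0: "1 \<le> \<bar>poly q 0\<bar>"
    and qt: "\<And>t::nat. 1 \<le> t \<Longrightarrow> t \<le> k \<Longrightarrow> \<bar>poly q (real t)\<bar> \<le> eps"
    and eps: "eps * (1 + 72 / real K) < 1"
  shows "k < 1 + K * d^2"
proof (rule ccontr)
  assume "\<not> k < 1 + K * d^2"
  then have kb: "1 + K * d^2 \<le> k" by simp
  have node: "nd K j = real (1 + K * j^2)" for j unfolding nd_def by simp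
  have qn: "\<bar>poly q (nd K j)\<bar> \<le> eps" if "j \<le> d" for j
  proof -
    have "K * j^2 \<le> K * d^2" using that by (simp add: power_mono)
    then have "1 + K * j^2 \<le> k" using kb by linarith
    then show ?thesis unfolding node by (intro qt) auto
  qed
  have e0: "eps \<ge> 0" using qn[of 0] by simp
  have "poly q 0 = (\<Sum>j\<le>d. poly q (nd K j) * wt K d j)"
    unfolding wt_def by (rule lagrange[OF deg nd_inj[OF K]])
  then have "\<bar>poly q 0\<bar> \<le> (\<Sum>j\<le>d. \<bar>poly q (nd K j)\<bar> * \<bar>wt K d j\<bar>)"
    by (simp add: sum_abs[THEN order.trans] abs_mult)
  also have "\<dots> \<le> (\<Sum>j\<le>d. eps * \<bar>wt K d j\<bar>)"
    by (rule sum_mono) (use qn in \<open>auto intro: mult_right_mono\<close>)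
  also have "\<dots> = eps * (\<Sum>j\<le>d. \<bar>wt K d j\<bar>)" by (simp add: sum_distrib_left)
  also have "\<dots> \<le> eps * (1 + 72 / real K)" using w_sum_abs[OF K] e0 by (intro mult_left_mono)
  finally show False using q0 eps by simp
qed



definition bp :: "nat \<Rightarrow> real poly" where
  "bp t = smult (1 / fact t) (\<Prod>l<t. [:- real l, 1:])"

lemma poly_bp: "poly (bp t) (real j) = real (j choose t)"
proof -
  have "poly (bp t) (real j) = (\<Prod>l<t. real j - real l) / fact t"
    unfolding bp_def by (simp add: poly_prod)
  also have "\<dots> = real j gchoose t" by (simp add: gbinomial_prod_rev atLeast0LessThan)
  also have "\<dots> = real (j choose t)" by (simp add: binomial_gbinomial)
  finally show ?thesis .
qed

lemma degree_bp: "degree (bp t) \<le> t"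
proof -
  have "degree (\<Prod>l<t. [:- real l, 1:]) \<le> (\<Sum>l<t. degree [:- real l, (1::real):])"
    using degree_prod_sum_le[of "{..<t}" "\<lambda>l. [:- real l, 1:]"] by (simp add: o_def)
  also have "\<dots> = t" by simp
  finally show ?thesis unfolding bp_def using degree_smult_le order.trans by blast
qed

lemma count_supsets:
  assumes B: "finite B" and S: "S \<subseteq> B"
  shows "card {A. A \<subseteq> B \<and> card A = j \<and> S \<subseteq> A} * (card B choose card S) = (card B choose j) * (j choose card S)"
proof (cases "card S \<le> j")
  case False
  have e: "{A. A \<subseteq> B \<and> card A = j \<and> S \<subseteq> A} = {}"
  proof -
    have "card S \<le> card A" if "A \<subseteq> B" "S \<subseteq> A" for A
      using that B by (intro card_mono) (auto intro: finite_subset)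
    then show ?thesis using False by auto
  qed
  show ?thesis unfolding e using False by (simp add: binomial_eq_0)
next
  case True
  have finS: "finite S" using B S finite_subset by blast
  have "bij_betw (\<lambda>A. A - S) {A. A \<subseteq> B \<and> card A = j \<and> S \<subseteq> A} {A'. A' \<subseteq> B - S \<and> card A' = j - card S}"
  proof (rule bij_betw_byWitness[where f'="\<lambda>A'. A' \<union> S"])
    show "\<forall>a\<in>{A. A \<subseteq> B \<and> card A = j \<and> S \<subseteq> A}. a - S \<union> S = a" by auto
    show "\<forall>a'\<in>{A'. A' \<subseteq> B - S \<and> card A' = j - card S}. a' \<union> S - S = a'" by auto
    show "(\<lambda>A. A - S) ` {A. A \<subseteq> B \<and> card A = j \<and> S \<subseteq> A} \<subseteq> {A'. A' \<subseteq> B - S \<and> card A' = j - card S}"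
    proof
      fix A' assume "A' \<in> (\<lambda>A. A - S) ` {A. A \<subseteq> B \<and> card A = j \<and> S \<subseteq> A}"
      then obtain A where A: "A \<subseteq> B" "card A = j" "S \<subseteq> A" "A' = A - S" by blast
      have "finite A" using A(1) B finite_subset by blast
      then show "A' \<in> {A'. A' \<subseteq> B - S \<and> card A' = j - card S}"
        using A by (auto simp: card_Diff_subset finS)
    qed
    show "(\<lambda>A'. A' \<union> S) ` {A'. A' \<subseteq> B - S \<and> card A' = j - card S} \<subseteq> {A. A \<subseteq> B \<and> card A = j \<and> S \<subseteq> A}"
    proof
      fix A assume "A \<in> (\<lambda>A'. A' \<union> S) ` {A'. A' \<subseteq> B - S \<and> card A' = j - card S}"
      then obtain A' where A': "A' \<subseteq> B - S" "card A' = j - card S" "A = A' \<union> S" by blast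
      have "finite A'" using A'(1) B finite_subset by blast
      then have "card A = j" using A' True finS by (subst A'(3), subst card_Un_disjoint) auto
      then show "A \<in> {A. A \<subseteq> B \<and> card A = j \<and> S \<subseteq> A}" using A' S by auto
    qed
  qed
  then have "card {A. A \<subseteq> B \<and> card A = j \<and> S \<subseteq> A} = card {A'. A' \<subseteq> B - S \<and> card A' = j - card S}"
    by (rule bij_betw_same_card)
  also have "\<dots> = (card B - card S) choose (j - card S)"
    using n_subsets[of "B - S" "j - card S"] B S finS by (simp add: card_Diff_subset)
  finally have c: "card {A. A \<subseteq> B \<and> card A = j \<and> S \<subseteq> A} = (card B - card S) choose (j - card S)" .
  show ?thesis
  proof (cases "j \<le> card B")
    case True2: True
    show ?thesis unfolding c using choose_mult[OF True True2] by (simp add: mult.commute)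
  next
    case False
    have "card S \<le> card B" using card_mono[OF B S] .
    then have "card B - card S < j - card S" using False True by simp
    then show ?thesis unfolding c using False by (simp add: binomial_eq_0)
  qed
qed

lemma ind_cube: "A \<subseteq> {..<n} \<Longrightarrow> (\<lambda>i. i \<in> A) \<in> cube n"
  unfolding cube_def by auto

lemma sym_bound0:
  fixes K :: nat
  assumes p: "poly_deg_le n d p" and B: "B \<subseteq> {..<n}"
    and p0: "1 \<le> \<bar>p (\<lambda>i. False)\<bar>"
    and pA: "\<And>A. A \<subseteq> B \<Longrightarrow> A \<noteq> {} \<Longrightarrow> \<bar>p (\<lambda>i. i \<in> A)\<bar> \<le> eps"
    and K: "K \<ge> 1" and eps: "eps * (1 + 72 / real K) < 1"
  shows "card B < 1 + K * d^2"
proof -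
  obtain c where c: "\<forall>x\<in>cube n. p x = (\<Sum>S\<in>Sd n d. c S * mon S x)"
    using p unfolding poly_deg_le_alt by blast
  have finB: "finite B" using B finite_subset by blast
  define k where "k = card B"
  define co where "co S = (if S \<subseteq> B then c S / real (k choose card S) else 0)" for S
  define Q where "Q = (\<Sum>S\<in>Sd n d. smult (co S) (bp (card S)))"
  have finSd: "\<And>S. S \<in> Sd n d \<Longrightarrow> finite S" unfolding Sd_def by (auto intro: finite_subset)
  have degQ: "degree Q \<le> d" unfolding Q_def
  proof (rule degree_sum_le)
    fix S assume "S \<in> Sd n d"
    then have "card S \<le> d" unfolding Sd_def by simp
    then show "degree (smult (co S) (bp (card S))) \<le> d"
      using degree_smult_le[of "co S" "bp (card S)"] degree_bp[of "card S"] by linarith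
  qed simp
  have polyQ: "poly Q (real j) = (\<Sum>S\<in>Sd n d. co S * real (j choose card S))" for j
    unfolding Q_def by (simp add: poly_sum poly_bp)
  have Q0: "poly Q 0 = p (\<lambda>i. False)"
  proof -
    have "poly Q 0 = poly Q (real 0)" by simp
    also have "\<dots> = (\<Sum>S\<in>Sd n d. co S * real (0 choose card S))" by (rule polyQ)
    also have "\<dots> = co {} * real (0 choose card ({}::nat set))"
    proof (rule sum_single)
      show "{} \<in> Sd n d" by (simp add: Sd_def)
      fix y assume "y \<in> Sd n d" "y \<noteq> {}"
      then have "card y \<noteq> 0" using finSd by auto
      then show "co y * real (0 choose card y) = 0" by simp
    qed simp
    also have "\<dots> = c {}" by (simp add: co_def)
    also have "c {} = c {} * mon {} (\<lambda>i. False)" by (simp add: mon_def)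
    also have "\<dots> = (\<Sum>S\<in>Sd n d. c S * mon S (\<lambda>i. False))"
    proof (rule sum_single[symmetric])
      show "{} \<in> Sd n d" by (simp add: Sd_def)
      fix y assume y: "y \<in> Sd n d" "y \<noteq> {}"
      then show "c y * mon y (\<lambda>i. False) = 0" using mon_eq[OF finSd[OF y(1)]] by auto
    qed simp
    also have "\<dots> = p (\<lambda>i. False)" using c ind_cube[of "{}" n] by simp
    finally show ?thesis .
  qed
  have Qj: "\<bar>poly Q (real j)\<bar> \<le> eps" if j: "1 \<le> j" "j \<le> k" for j
  proof -
    define AA where "AA = {A. A \<subseteq> B \<and> card A = j}"
    have finAA: "finite AA" unfolding AA_def using finB by auto
    have cardAA: "card AA = k choose j" unfolding AA_def k_def by (rule n_subsets[OF finB])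
    have kjpos: "(k choose j) > 0" using j by simp
    have "(\<Sum>A\<in>AA. p (\<lambda>i. i \<in> A)) = (\<Sum>A\<in>AA. \<Sum>S\<in>Sd n d. c S * mon S (\<lambda>i. i \<in> A))"
      using c ind_cube B unfolding AA_def by (intro sum.cong) auto
    also have "\<dots> = (\<Sum>S\<in>Sd n d. \<Sum>A\<in>AA. c S * mon S (\<lambda>i. i \<in> A))" by (rule sum.swap)
    also have "\<dots> = (\<Sum>S\<in>Sd n d. real (k choose j) * (co S * real (j choose card S)))"
    proof (rule sum.cong[OF refl])
      fix S assume S: "S \<in> Sd n d"
      have "(\<Sum>A\<in>AA. c S * mon S (\<lambda>i. i \<in> A)) = c S * (\<Sum>A\<in>AA. if S \<subseteq> A then 1 else 0)"
        unfolding sum_distrib_left by (intro sum.cong refl) (auto simp: mon_eq finSd[OF S])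
      also have "(\<Sum>A\<in>AA. if S \<subseteq> A then 1 else (0::real)) = real (card {A\<in>AA. S \<subseteq> A})"
        using sum.inter_filter[OF finAA, of "\<lambda>_. (1::real)" "\<lambda>A. S \<subseteq> A"] by simp
      also have "{A\<in>AA. S \<subseteq> A} = {A. A \<subseteq> B \<and> card A = j \<and> S \<subseteq> A}" unfolding AA_def by auto
      finally have e1: "(\<Sum>A\<in>AA. c S * mon S (\<lambda>i. i \<in> A)) = c S * real (card {A. A \<subseteq> B \<and> card A = j \<and> S \<subseteq> A})" .
      show "(\<Sum>A\<in>AA. c S * mon S (\<lambda>i. i \<in> A)) = real (k choose j) * (co S * real (j choose card S))"
      proof (cases "S \<subseteq> B")
        case True
        have tk: "card S \<le> k" unfolding k_def using card_mono[OF finB True] .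
        then have pos: "real (k choose card S) > 0" by simp
        have "real (card {A. A \<subseteq> B \<and> card A = j \<and> S \<subseteq> A}) * real (k choose card S) = real (k choose j) * real (j choose card S)"
          using count_supsets[OF finB True, of j] unfolding k_def by (metis of_nat_mult)
        then have "real (card {A. A \<subseteq> B \<and> card A = j \<and> S \<subseteq> A}) = real (k choose j) * real (j choose card S) / real (k choose card S)"
          using pos by (simp add: field_simps)
        then show ?thesis unfolding e1 co_def using True pos by (simp add: field_simps)
      next
        case False
        then have e2: "{A. A \<subseteq> B \<and> card A = j \<and> S \<subseteq> A} = {}" by auto
        show ?thesis unfolding e1 co_def e2 using False by simp
      qed
    qed
    also have "\<dots> = real (k choose j) * poly Q (real j)" by (simp add: polyQ sum_distrib_left)
    finally have sumeq: "(\<Sum>A\<in>AA. p (\<lambda>i. i \<in> A)) = real (k choose j) * poly Q (real j)" .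
    have "\<bar>\<Sum>A\<in>AA. p (\<lambda>i. i \<in> A)\<bar> \<le> (\<Sum>A\<in>AA. \<bar>p (\<lambda>i. i \<in> A)\<bar>)" by (rule sum_abs)
    also have "\<dots> \<le> (\<Sum>A\<in>AA. eps)"
    proof (rule sum_mono)
      fix A assume "A \<in> AA"
      then have "A \<subseteq> B" "A \<noteq> {}" using j unfolding AA_def by auto
      then show "\<bar>p (\<lambda>i. i \<in> A)\<bar> \<le> eps" by (rule pA)
    qed
    also have "\<dots> = real (k choose j) * eps" using cardAA by simp
    finally have "real (k choose j) * \<bar>poly Q (real j)\<bar> \<le> real (k choose j) * eps"
      unfolding sumeq by (simp add: abs_mult)
    then show ?thesis using kjpos by simp
  qed
  show ?thesis unfolding k_def[symmetric]
    by (rule univ_bound[OF K degQ _ Qj eps]) (use p0 Q0 in auto)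
qed

lemma sym_bound:
  fixes K :: nat
  assumes p: "poly_deg_le n d p" and B: "B \<subseteq> {..<n}" and z: "z \<in> cube n"
    and pz: "1 \<le> \<bar>p z\<bar>"
    and pA: "\<And>A. A \<subseteq> B \<Longrightarrow> A \<noteq> {} \<Longrightarrow> \<bar>p (\<lambda>i. if i \<in> A then \<not> z i else z i)\<bar> \<le> eps"
    and K: "K \<ge> 1" and eps: "eps * (1 + 72 / real K) < 1"
  shows "card B < 1 + K * d^2"
proof (rule sym_bound0[OF pdeg_xr[OF z p] B _ _ K eps])
  have "xr z (\<lambda>i. False) = z" unfolding xr_def by auto
  then show "1 \<le> \<bar>p (xr z (\<lambda>i. False))\<bar>" using pz by simp
  fix A assume "A \<subseteq> B" "A \<noteq> {}"
  moreover have "xr z (\<lambda>i. i \<in> A) = (\<lambda>i. if i \<in> A then \<not> z i else z i)" unfolding xr_def by auto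
  ultimately show "\<bar>p (xr z (\<lambda>i. i \<in> A))\<bar> \<le> eps" using pA by simp
qed

definition le_pt :: "(nat \<Rightarrow> bool) \<Rightarrow> (nat \<Rightarrow> bool) \<Rightarrow> bool" where
  "le_pt x y \<longleftrightarrow> (\<forall>i. x i \<longrightarrow> y i)"

lemma mono_cert1:
  fixes K :: nat
  assumes mono: "\<And>x y. x \<in> cube n \<Longrightarrow> y \<in> cube n \<Longrightarrow> le_pt x y \<Longrightarrow> g x \<Longrightarrow> g y"
    and p: "poly_deg_le n d p"
    and pw: "\<And>x. x \<in> cube n \<Longrightarrow> (\<not> g x \<longrightarrow> \<bar>p x\<bar> \<le> eps) \<and> (g x \<longrightarrow> 1 \<le> \<bar>p x\<bar>)"
    and K: "K \<ge> 1" and eps: "eps * (1 + 72 / real K) < 1"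
  shows "cert n g True (K * d^2)"
  unfolding cert_def
proof (intro ballI impI)
  fix x assume x: "x \<in> cube n" "g x = True"
  define T where "T = {i. i < n \<and> x i}"
  define F where "F S \<longleftrightarrow> S \<subseteq> T \<and> g (\<lambda>i. i \<in> S)" for S
  have Tn: "T \<subseteq> {..<n}" unfolding T_def by auto
  have "(\<lambda>i. i \<in> T) = x" using x(1) unfolding T_def cube_def by (auto simp: not_le[symmetric])
  then have "F T" unfolding F_def using x by simp
  then obtain S where S: "F S" and Smin: "\<And>S'. F S' \<Longrightarrow> card S \<le> card S'"
    using ex_has_least_nat[of F T card] by blast
  have ST: "S \<subseteq> T" and gS: "g (\<lambda>i. i \<in> S)" using S unfolding F_def by auto
  have Sn: "S \<subseteq> {..<n}" using ST Tn by auto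
  have finS: "finite S" using Sn finite_subset by blast
  have "card S < 1 + K * d^2"
  proof (rule sym_bound[OF p Sn ind_cube[OF Sn] _ _ K eps])
    show "1 \<le> \<bar>p (\<lambda>i. i \<in> S)\<bar>" using pw[OF ind_cube[OF Sn]] gS by simp
    fix A assume A: "A \<subseteq> S" "A \<noteq> {}"
    have eq: "(\<lambda>i. if i \<in> A then \<not> i \<in> S else i \<in> S) = (\<lambda>i. i \<in> S - A)" using A by auto
    have "card (S - A) < card S" using A finS by (intro psubset_card_mono) auto
    then have "\<not> F (S - A)" using Smin by force
    then have "\<not> g (\<lambda>i. i \<in> S - A)" unfolding F_def using ST by auto
    moreover have "S - A \<subseteq> {..<n}" using Sn by auto
    ultimately show "\<bar>p (\<lambda>i. if i \<in> A then \<not> i \<in> S else i \<in> S)\<bar> \<le> eps"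
      unfolding eq using pw[OF ind_cube] by blast
  qed
  moreover have "\<forall>y\<in>cube n. (\<forall>i\<in>S. y i = x i) \<longrightarrow> g y = True"
  proof (intro ballI impI)
    fix y assume y: "y \<in> cube n" "\<forall>i\<in>S. y i = x i"
    have "le_pt (\<lambda>i. i \<in> S) y" unfolding le_pt_def using y ST unfolding T_def by auto
    then show "g y = True" using mono[OF ind_cube[OF Sn] y(1)] gS by simp
  qed
  ultimately show "\<exists>S\<subseteq>{..<n}. card S \<le> K * d\<^sup>2 \<and> (\<forall>y\<in>cube n. (\<forall>i\<in>S. y i = x i) \<longrightarrow> g y = True)"
    using Sn by (intro exI[of _ S]) auto
qed

lemma mono_cert0:
  fixes K :: nat
  assumes mono: "\<And>x y. x \<in> cube n \<Longrightarrow> y \<in> cube n \<Longrightarrow> le_pt x y \<Longrightarrow> g x \<Longrightarrow> g y"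
    and r: "poly_deg_le n d r"
    and rw: "\<And>x. x \<in> cube n \<Longrightarrow> (g x \<longrightarrow> \<bar>r x\<bar> \<le> eps) \<and> (\<not> g x \<longrightarrow> 1 \<le> \<bar>r x\<bar>)"
    and K: "K \<ge> 1" and eps: "eps * (1 + 72 / real K) < 1"
  shows "cert n g False (K * d^2)"
  unfolding cert_def
proof (intro ballI impI)
  fix x assume x: "x \<in> cube n" "g x = False"
  define T where "T = {i. i < n \<and> \<not> x i}"
  define zp where "zp S = (\<lambda>i. i < n \<and> i \<notin> S)" for S
  have zc: "zp S \<in> cube n" for S unfolding zp_def cube_def by auto
  define F where "F S \<longleftrightarrow> S \<subseteq> T \<and> \<not> g (zp S)" for S
  have Tn: "T \<subseteq> {..<n}" unfolding T_def by auto
  have "zp T = x" using x(1) unfolding T_def cube_def zp_def by (auto simp: not_le[symmetric])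
  then have "F T" unfolding F_def using x by simp
  then obtain S where S: "F S" and Smin: "\<And>S'. F S' \<Longrightarrow> card S \<le> card S'"
    using ex_has_least_nat[of F T card] by blast
  have ST: "S \<subseteq> T" and gS: "\<not> g (zp S)" using S unfolding F_def by auto
  have Sn: "S \<subseteq> {..<n}" using ST Tn by auto
  have finS: "finite S" using Sn finite_subset by blast
  have "card S < 1 + K * d^2"
  proof (rule sym_bound[OF r Sn zc _ _ K eps])
    show "1 \<le> \<bar>r (zp S)\<bar>" using rw[OF zc] gS by simp
    fix A assume A: "A \<subseteq> S" "A \<noteq> {}"
    have eq: "(\<lambda>i. if i \<in> A then \<not> zp S i else zp S i) = zp (S - A)" using A Sn unfolding zp_def fun_eq_iff by auto
    have "card (S - A) < card S" using A finS by (intro psubset_card_mono) auto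
    then have "\<not> F (S - A)" using Smin by force
    then have "g (zp (S - A))" unfolding F_def using ST by auto
    then show "\<bar>r (\<lambda>i. if i \<in> A then \<not> zp S i else zp S i)\<bar> \<le> eps"
      unfolding eq using rw[OF zc] by blast
  qed
  moreover have "\<forall>y\<in>cube n. (\<forall>i\<in>S. y i = x i) \<longrightarrow> g y = False"
  proof (intro ballI impI)
    fix y assume y: "y \<in> cube n" "\<forall>i\<in>S. y i = x i"
    have "le_pt y (zp S)" unfolding le_pt_def zp_def using y ST unfolding T_def cube_def by (auto simp: not_le[symmetric])
    then show "g y = False" using mono[OF y(1) zc] gS by auto
  qed
  ultimately show "\<exists>S\<subseteq>{..<n}. card S \<le> K * d\<^sup>2 \<and> (\<forall>y\<in>cube n. (\<forall>i\<in>S. y i = x i) \<longrightarrow> g y = False)"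
    using Sn by (intro exI[of _ S]) auto
qed

lemma mono_poly:
  fixes K :: nat
  assumes mono: "\<And>x y. x \<in> cube n \<Longrightarrow> y \<in> cube n \<Longrightarrow> le_pt x y \<Longrightarrow> g x \<Longrightarrow> g y"
    and p: "poly_deg_le n d1 p"
    and pw: "\<And>x. x \<in> cube n \<Longrightarrow> (\<not> g x \<longrightarrow> \<bar>p x\<bar> \<le> eps) \<and> (g x \<longrightarrow> 1 \<le> \<bar>p x\<bar>)"
    and r: "poly_deg_le n d0 r"
    and rw: "\<And>x. x \<in> cube n \<Longrightarrow> (g x \<longrightarrow> \<bar>r x\<bar> \<le> eps) \<and> (\<not> g x \<longrightarrow> 1 \<le> \<bar>r x\<bar>)"
    and K: "K \<ge> 1" and eps: "eps * (1 + 72 / real K) < 1"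
  shows "poly_deg_le n (K * d1^2 * (K * d0^2)) (\<lambda>x. if g x then 1 else 0)"
  by (rule cert_poly[OF mono_cert1[OF mono p pw K eps] mono_cert0[OF mono r rw K eps]])

lemma N_wit:
  assumes "0 < eps"
  shows "\<exists>p. poly_deg_le n (N_deg eps n f) p \<and> (\<forall>x\<in>cube n. (\<not> f x \<longrightarrow> \<bar>p x\<bar> \<le> eps) \<and> (f x \<longrightarrow> \<bar>p x\<bar> \<ge> 1))"
  unfolding N_deg_def
proof (rule LeastI_ex)
  show "\<exists>d p. poly_deg_le n d p \<and> (\<forall>x\<in>cube n. (\<not> f x \<longrightarrow> \<bar>p x\<bar> \<le> eps) \<and> (f x \<longrightarrow> 1 \<le> \<bar>p x\<bar>))"
    using assms pdeg_all[of n "\<lambda>x. if f x then 1 else 0"] by (intro exI[of _ n] exI[of _ "\<lambda>x. if f x then 1 else 0"]) auto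
qed

lemma approx_le: "poly_deg_le n D (\<lambda>x. if f x then 1 else 0) \<Longrightarrow> approx_deg n f \<le> D"
  unfolding approx_deg_def by (rule Least_le) (rule exI[of _ "\<lambda>x. if f x then 1 else 0"], auto)

theorem lemma3p9:
  fixes eps :: real
  assumes "0 < eps" and "eps < 1"
  shows "\<exists>C :: real. \<forall>n f. unate n f \<longrightarrow>
           real (approx_deg n f) \<le> C * real (M_deg eps n f) ^ 4"
proof -
  define K :: nat where "K = nat \<lceil>72 / (1 - eps)\<rceil> + 1"
  have K: "K \<ge> 1" unfolding K_def by simp
  have "real K > 72 / (1 - eps)" unfolding K_def by linarith
  then have "72 < (1 - eps) * real K" using assms by (simp add: field_simps)
  then have h72: "72 / real K < 1 - eps" using K by (simp add: field_simps)
  have "eps * (72 / real K) \<le> 72 / real K" using assms by (intro mult_left_le_one_le) auto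
  then have eps: "eps * (1 + 72 / real K) < 1" using h72 by (simp add: distrib_left)
  have main: "real (approx_deg n f) \<le> real K ^ 2 * real (M_deg eps n f) ^ 4" if u: "unate n f" for n f
  proof -
    obtain a g where a: "a \<in> cube n"
      and mg: "monotone_on (cube n) (\<le>) (\<le>) g \<or> monotone_on (cube n) (\<le>) (\<ge>) g"
      and fg: "\<And>x. x \<in> cube n \<Longrightarrow> f x = g (xr a x)"
      using u unfolding unate_def xr_def by blast
    define d1 where "d1 = N_deg eps n f"
    define d0 where "d0 = N_deg eps n (\<lambda>x. \<not> f x)"
    obtain p where p: "poly_deg_le n d1 p" and pw: "\<forall>x\<in>cube n. (\<not> f x \<longrightarrow> \<bar>p x\<bar> \<le> eps) \<and> (f x \<longrightarrow> \<bar>p x\<bar> \<ge> 1)"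
      using N_wit[OF assms(1), of n f] unfolding d1_def by blast
    obtain r where r: "poly_deg_le n d0 r" and rw: "\<forall>x\<in>cube n. (\<not> \<not> f x \<longrightarrow> \<bar>r x\<bar> \<le> eps) \<and> (\<not> f x \<longrightarrow> \<bar>r x\<bar> \<ge> 1)"
      using N_wit[OF assms(1), of n "\<lambda>x. \<not> f x"] unfolding d0_def by blast
    have gf: "g y = f (xr a y)" if "y \<in> cube n" for y using fg[OF xr_cube[OF a that]] by simp
    have p': "poly_deg_le n d1 (\<lambda>y. p (xr a y))" by (rule pdeg_xr[OF a p])
    have r': "poly_deg_le n d0 (\<lambda>y. r (xr a y))" by (rule pdeg_xr[OF a r])
    have pw': "(\<not> g y \<longrightarrow> \<bar>p (xr a y)\<bar> \<le> eps) \<and> (g y \<longrightarrow> 1 \<le> \<bar>p (xr a y)\<bar>)" if "y \<in> cube n" for y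
      using pw xr_cube[OF a that] gf[OF that] by auto
    have rw': "(g y \<longrightarrow> \<bar>r (xr a y)\<bar> \<le> eps) \<and> (\<not> g y \<longrightarrow> 1 \<le> \<bar>r (xr a y)\<bar>)" if "y \<in> cube n" for y
      using rw xr_cube[OF a that] gf[OF that] by auto
    have G: "poly_deg_le n (K * d1^2 * (K * d0^2)) (\<lambda>x. if g x then 1 else 0)"
      using mg
    proof
      assume m: "monotone_on (cube n) (\<le>) (\<le>) g"
      have mono: "g y" if "x \<in> cube n" "y \<in> cube n" "le_pt x y" "g x" for x y
      proof -
        have "x \<le> y" using that(3) unfolding le_pt_def le_fun_def le_bool_def by blast
        then have "g x \<le> g y" using monotone_onD[OF m that(1,2)] by blast
        then show ?thesis using that(4) by (simp add: le_bool_def)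
      qed
      show ?thesis by (rule mono_poly[OF mono p' pw' r' rw' K eps])
    next
      assume m: "monotone_on (cube n) (\<le>) (\<ge>) g"
      have mono: "\<not> g y" if "x \<in> cube n" "y \<in> cube n" "le_pt x y" "\<not> g x" for x y
      proof -
        have "x \<le> y" using that(3) unfolding le_pt_def le_fun_def le_bool_def by blast
        then have "g y \<le> g x" using monotone_onD[OF m that(1,2)] by blast
        then show ?thesis using that(4) by (simp add: le_bool_def)
      qed
      have H: "poly_deg_le n (K * d0^2 * (K * d1^2)) (\<lambda>x. if \<not> g x then 1 else 0)"
        by (rule mono_poly[where g="\<lambda>x. \<not> g x", OF mono r' _ p' _ K eps]) (use pw' rw' in auto)
      have "poly_deg_le n (K * d0^2 * (K * d1^2)) (\<lambda>x. 1 - (if \<not> g x then 1 else 0))"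
        by (rule pdeg_diff[OF pdeg_const H])
      then have "poly_deg_le n (K * d1^2 * (K * d0^2)) (\<lambda>x. 1 - (if \<not> g x then 1 else 0))"
        by (rule pdeg_mono) (simp add: mult_ac)
      then show ?thesis by (rule pdeg_cong) auto
    qed
    have "poly_deg_le n (K * d1^2 * (K * d0^2)) (\<lambda>x. if f x then 1 else 0)"
      by (rule pdeg_cong[OF pdeg_xr[OF a G]]) (use fg in auto)
    then have "approx_deg n f \<le> K * d1^2 * (K * d0^2)" by (rule approx_le)
    then have "real (approx_deg n f) \<le> real K ^ 2 * (real d1 ^ 2 * real d0 ^ 2)"
      by (simp add: power2_eq_square mult_ac flip: of_nat_mult of_nat_le_iff)
    also have "\<dots> \<le> real K ^ 2 * (real (M_deg eps n f) ^ 2 * real (M_deg eps n f) ^ 2)"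
    proof -
      have "d1 \<le> M_deg eps n f" "d0 \<le> M_deg eps n f" unfolding M_deg_def d1_def d0_def by auto
      then show ?thesis by (intro mult_left_mono mult_mono power_mono) auto
    qed
    also have "\<dots> = real K ^ 2 * real (M_deg eps n f) ^ 4" by (simp flip: power_add)
    finally show ?thesis .
  qed
  show ?thesis by (rule exI[of _ "real K ^ 2"]) (use main in blast)
qed

end
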